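(* Let $G$ be a graph with maximum degree $\Delta\ge3$. Then $\pi_T(G)<15\Delta^2$.
   Context: Graphs are finite and simple. A sequence is nonrepetitive if no block of consecutive terms has the form $r_1\dots r_nr_1\dots r_n$ with $n\ge1$. A (strong) total Thue colouring of $G$ is a colouring of $V(G)\cup E(G)$ such that for every path $v_1,e_1,v_2,\dots,e_{k-1},v_k$ in $G$ the sequence of colours of $v_1,e_1,\dots,v_k$ is nonrepetitive, the sequence of colours of $v_1,\dots,v_k$ is nonrepetitive, and the sequence of colours of $e_1,\dots,e_{k-1}$ is nonrepetitive. $\pi_T(G)$ is the minimum number of colours in a total Thue colouring of $G$. *)

theory Defs
  imports Main
begin

definition simple_graph :: "'a set \<Rightarrow> 'a set set \<Rightarrow> bool" where
  "simple_graph V E \<longleftrightarrow> finite V \<and>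
     (\<forall>e\<in>E. \<exists>u v. u \<noteq> v \<and> e = {u, v} \<and> u \<in> V \<and> v \<in> V)"

definition degree :: "'a set set \<Rightarrow> 'a \<Rightarrow> nat" where
  "degree E v = card {e\<in>E. v \<in> e}"

definition max_degree :: "'a set \<Rightarrow> 'a set set \<Rightarrow> nat" where
  "max_degree V E = Max (degree E ` V)"

definition nonrepetitive :: "'c list \<Rightarrow> bool" where
  "nonrepetitive xs \<longleftrightarrow>
     \<not> (\<exists>i n. n \<ge> 1 \<and> i + 2 * n \<le> length xs \<and>
            take n (drop i xs) = take n (drop (i + n) xs))"

definition is_path :: "'a set \<Rightarrow> 'a set set \<Rightarrow> 'a list \<Rightarrow> bool" where
  "is_path V E vs \<longleftrightarrow> vs \<noteq> [] \<and> set vs \<subseteq> V \<and> distinct vs \<and>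
     (\<forall>i. Suc i < length vs \<longrightarrow> {vs ! i, vs ! Suc i} \<in> E)"

definition path_edges :: "'a list \<Rightarrow> 'a set list" where
  "path_edges vs = map (\<lambda>i. {vs ! i, vs ! Suc i}) [0..<length vs - 1]"

text \<open>Colour sequence of v_1, e_1, v_2, ..., e_{k-1}, v_k; a total colouring
  colours vertices (Inl v) and edges (Inr e).\<close>
fun total_seq :: "('a + 'a set \<Rightarrow> 'c) \<Rightarrow> 'a list \<Rightarrow> 'c list" where
  "total_seq c [] = []"
| "total_seq c [v] = [c (Inl v)]"
| "total_seq c (v # w # vs) = c (Inl v) # c (Inr {v, w}) # total_seq c (w # vs)"

definition total_thue_colouring ::
    "'a set \<Rightarrow> 'a set set \<Rightarrow> ('a + 'a set \<Rightarrow> nat) \<Rightarrow> nat \<Rightarrow> bool" where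
  "total_thue_colouring V E c k \<longleftrightarrow>
     (\<forall>v\<in>V. c (Inl v) < k) \<and> (\<forall>e\<in>E. c (Inr e) < k) \<and>
     (\<forall>vs. is_path V E vs \<longrightarrow>
        nonrepetitive (total_seq c vs) \<and>
        nonrepetitive (map (\<lambda>v. c (Inl v)) vs) \<and>
        nonrepetitive (map (\<lambda>e. c (Inr e)) (path_edges vs)))"

definition pi_T :: "'a set \<Rightarrow> 'a set set \<Rightarrow> nat" where
  "pi_T V E = (LEAST k. \<exists>c. total_thue_colouring V E c k)"

end

theory Submission
  imports Defs Complex_Main "HOL-Library.FuncSet"
begin


definition sqr :: "'c list \<Rightarrow> bool" where
  "sqr xs \<longleftrightarrow> take (length xs div 2) xs = drop (length xs div 2) xs"

definition goodc :: "'e list set \<Rightarrow> nat \<Rightarrow> 'e set \<Rightarrow> ('e \<Rightarrow> nat) set" where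
  "goodc Q k S = {f \<in> S \<rightarrow>\<^sub>E {..<k}. \<forall>q\<in>Q. set q \<subseteq> S \<longrightarrow> \<not> sqr (map f q)}"

lemma goodc_restrict:
  assumes "f \<in> goodc Q k S" "T \<subseteq> S"
  shows "restrict f T \<in> goodc Q k T"
proof -
  have "restrict f T \<in> T \<rightarrow>\<^sub>E {..<k}" using assms by (auto simp: goodc_def)
  moreover have "\<not> sqr (map (restrict f T) q)" if "q \<in> Q" "set q \<subseteq> T" for q
  proof -
    have eq: "map (restrict f T) q = map f q" using that by (auto simp: restrict_def)
    have "\<not> sqr (map f q)" using assms that by (auto simp: goodc_def)
    thus ?thesis unfolding eq .
  qed
  ultimately show ?thesis by (auto simp: goodc_def)
qed

lemma finite_goodc: "finite S \<Longrightarrow> finite (goodc Q k S)"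
  unfolding goodc_def by (rule finite_subset[OF _ finite_PiE[of S "\<lambda>_. {..<k}"]]) auto

lemma halves:
  assumes "distinct q" "length q = 2 * l" "x \<in> set q"
  obtains H R where "length H = l" "length R = l" "distinct H" "x \<in> set H"
    "set H \<inter> set R = {}" "set H \<union> set R = set q"
    "\<And>g. sqr (map g q) \<Longrightarrow> map g H = map g R"
proof -
  have ld: "length q div 2 = l" using assms by simp
  have disj: "set (take l q) \<inter> set (drop l q) = {}"
    using assms set_take_disj_set_drop_if_distinct by blast
  have un: "set (take l q) \<union> set (drop l q) = set q"
    by (metis append_take_drop_id set_append)
  have sq: "map g (take l q) = map g (drop l q)" if "sqr (map g q)" for g
    using that ld by (simp add: sqr_def take_map drop_map)
  have sq': "map g (drop l q) = map g (take l q)" if "sqr (map g q)" for g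
    using sq[OF that] by simp
  show ?thesis
  proof (cases "x \<in> set (take l q)")
    case True
    show ?thesis
      by (rule that[of "take l q" "drop l q"]) (use assms True disj un sq in auto)
  next
    case False
    then have "x \<in> set (drop l q)" using un assms by auto
    show ?thesis
    proof (rule that[of "drop l q" "take l q"])
      show "set (drop l q) \<inter> set (take l q) = {}" using disj by blast
      show "set (drop l q) \<union> set (take l q) = set q" using un by blast
      show "map g (drop l q) = map g (take l q)" if "sqr (map g q)" for g using sq'[OF that] .
    qed (use assms \<open>x \<in> set (drop l q)\<close> in auto)
  qed
qed

lemma ratio:
  fixes U :: "'e set" and Q :: "'e list set" and k :: nat and \<alpha> :: real
  assumes fin: "finite U"
    and Qp: "\<forall>q\<in>Q. distinct q \<and> even (length q) \<and> length q > 0"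
    and \<alpha>: "\<alpha> \<ge> 1"
    and W: "\<forall>x\<in>U. (\<Sum>q\<in>{q\<in>Q. set q \<subseteq> U \<and> x \<in> set q}. (1/\<alpha>)^(length q div 2 - 1)) \<le> real k - \<alpha>"
  shows "S \<subseteq> U \<Longrightarrow> x \<in> U \<Longrightarrow> x \<notin> S \<Longrightarrow>
     \<alpha> * card (goodc Q k S) \<le> card (goodc Q k (insert x S))"
proof (induction "card S" arbitrary: S x rule: less_induct)
  case less
  note SU = less.prems(1) and xU = less.prems(2) and xS = less.prems(3)
  have finS: "finite S" using SU fin finite_subset by blast
  have chain: "card (goodc Q k T) * \<alpha>^card D \<le> card (goodc Q k (T \<union> D))"
    if "finite D" "T \<inter> D = {}" "T \<union> D \<subseteq> S" for D T
    using that
  proof (induction D rule: finite_induct)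
    case empty
    then show ?case by simp
  next
    case (insert y D)
    have IH: "card (goodc Q k T) * \<alpha>^card D \<le> card (goodc Q k (T \<union> D))"
      using insert by auto
    have yS: "y \<in> S" "y \<notin> T \<union> D" using insert by auto
    have "card (T \<union> D) < card S"
      by (rule psubset_card_mono[OF finS]) (use insert yS in auto)
    then have st: "\<alpha> * card (goodc Q k (T \<union> D)) \<le> card (goodc Q k (insert y (T \<union> D)))"
      using less.hyps[of "T \<union> D" y] insert SU yS by auto
    have "card (goodc Q k T) * \<alpha>^card (insert y D) = \<alpha> * (card (goodc Q k T) * \<alpha>^card D)"
      using insert by simp
    also have "\<dots> \<le> \<alpha> * card (goodc Q k (T \<union> D))"
      using IH \<alpha> by (intro mult_left_mono) auto
    also have "\<dots> \<le> card (goodc Q k (T \<union> insert y D))" using st by simp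
    finally show ?case .
  qed
  define G where "G = goodc Q k S"
  define G' where "G' = goodc Q k (insert x S)"
  define Ext where "Ext = (\<lambda>p. (fst p)(x := snd p)) ` (G \<times> {..<k})"
  define Qx where "Qx = {q\<in>Q. set q \<subseteq> insert x S \<and> x \<in> set q}"
  define Qb where "Qb = {q\<in>Q. set q \<subseteq> U \<and> x \<in> set q}"
  define B where "B q = {g\<in>Ext. sqr (map g q)}" for q
  have finG: "finite G" unfolding G_def by (rule finite_goodc[OF finS])
  have finQb: "finite Qb"
    by (rule finite_subset[OF _ finite_subset_distinct[OF fin]]) (use Qp in \<open>auto simp: Qb_def\<close>)
  have QxQb: "Qx \<subseteq> Qb" using SU xU by (auto simp: Qx_def Qb_def)
  have finQx: "finite Qx" using finQb QxQb finite_subset by blast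
  have cardExt: "card Ext = card G * k"
  proof -
    have inj: "inj_on (\<lambda>p. (fst p)(x := snd p)) (G \<times> {..<k})"
    proof (rule inj_onI)
      fix p p' assume p: "p \<in> G \<times> {..<k}" "p' \<in> G \<times> {..<k}"
        and eq: "(fst p)(x := snd p) = (fst p')(x := snd p')"
      have "snd p = snd p'" using fun_cong[OF eq, of x] by simp
      moreover have "fst p = fst p'"
      proof
        fix y show "fst p y = fst p' y"
        proof (cases "y = x")
          case True
          have "fst p \<in> S \<rightarrow>\<^sub>E {..<k}" "fst p' \<in> S \<rightarrow>\<^sub>E {..<k}"
            using p unfolding G_def goodc_def by auto
          then have "fst p x = undefined" "fst p' x = undefined" using xS by (auto intro: PiE_arb)
          then show ?thesis using True by simp
        next
          case False
          then show ?thesis using fun_cong[OF eq, of y] by simp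
        qed
      qed
      ultimately show "p = p'" by (simp add: prod_eq_iff)
    qed
    have "card Ext = card (G \<times> {..<k})" unfolding Ext_def by (rule card_image[OF inj])
    then show ?thesis by (simp add: card_cartesian_product)
  qed
  have ExtPi: "Ext \<subseteq> insert x S \<rightarrow>\<^sub>E {..<k}"
  proof
    fix g assume "g \<in> Ext"
    then obtain f c where fc: "f \<in> G" "c < k" "g = f(x:=c)" by (auto simp: Ext_def)
    have "f \<in> S \<rightarrow>\<^sub>E {..<k}" using fc by (auto simp: G_def goodc_def)
    then show "g \<in> insert x S \<rightarrow>\<^sub>E {..<k}" using fc by (auto intro!: PiE_fun_upd)
  qed
  have finExt: "finite Ext" unfolding Ext_def using finG by auto
  have cover: "Ext \<subseteq> G' \<union> (\<Union>q\<in>Qx. B q)"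
  proof
    fix g assume g: "g \<in> Ext"
    show "g \<in> G' \<union> (\<Union>q\<in>Qx. B q)"
    proof (cases "g \<in> G'")
      case False
      then obtain q where q: "q \<in> Q" "set q \<subseteq> insert x S" "sqr (map g q)"
        using g ExtPi by (auto simp: G'_def goodc_def)
      obtain f c where fc: "f \<in> G" "g = f(x:=c)" using g by (auto simp: Ext_def)
      have "x \<in> set q"
      proof (rule ccontr)
        assume "x \<notin> set q"
        then have s: "set q \<subseteq> S" "map g q = map f q" using q fc by auto
        then have "sqr (map f q)" using q(3) by metis
        then show False using q(1) s(1) fc by (auto simp: G_def goodc_def)
      qed
      then show ?thesis using q g by (auto simp: Qx_def B_def)
    qed simp
  qed
  have Bq: "card (B q) \<le> card G * (1/\<alpha>)^(length q div 2 - 1)" if qQ: "q \<in> Qx" for q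
  proof -
    define l where "l = length q div 2"
    have qp: "distinct q" "length q = 2 * l" "x \<in> set q" "set q \<subseteq> insert x S"
      using qQ Qp by (auto simp: Qx_def l_def)
    obtain H R where HO: "length H = l" "length R = l" "distinct H" "x \<in> set H"
      "set H \<inter> set R = {}" "set H \<union> set R = set q"
      "\<And>g::'e \<Rightarrow> nat. sqr (map g q) \<Longrightarrow> map g H = map g R"
      using halves[OF qp(1-3)] by metis
    define T where "T = insert x S - set H"
    define D where "D = set H - {x}"
    have cD: "card D = l - 1" unfolding D_def using HO by (simp add: distinct_card)
    have TD: "T \<inter> D = {}" "T \<union> D = S" using HO qp xS by (auto simp: T_def D_def)
    have ch: "card (goodc Q k T) * \<alpha>^(l - 1) \<le> card G"
      using chain[of D T] TD cD finS unfolding G_def D_def by auto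
    have "card (B q) \<le> card (goodc Q k T)"
    proof (rule card_inj_on_le)
      show "inj_on (\<lambda>g. restrict g T) (B q)"
      proof (rule inj_onI)
        fix g1 g2 assume g: "g1 \<in> B q" "g2 \<in> B q" and eq: "restrict g1 T = restrict g2 T"
        have pi: "g1 \<in> insert x S \<rightarrow>\<^sub>E {..<k}" "g2 \<in> insert x S \<rightarrow>\<^sub>E {..<k}"
          using g ExtPi by (auto simp: B_def)
        have s12: "sqr (map g1 q)" "sqr (map g2 q)" using g by (auto simp: B_def)
        have m: "map g1 H = map g1 R" "map g2 H = map g2 R"
          by (rule HO(7)[OF s12(1)], rule HO(7)[OF s12(2)])
        show "g1 = g2"
        proof
          fix y
          show "g1 y = g2 y"
          proof (cases "y \<in> insert x S")
            case False
            then have "g1 y = undefined" "g2 y = undefined" using pi by (auto intro: PiE_arb)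
            then show ?thesis by simp
          next
            case True
            show ?thesis
            proof (cases "y \<in> T")
              case True
              then show ?thesis using fun_cong[OF eq, of y] by simp
            next
              case False
              then have "y \<in> set H" using True by (auto simp: T_def)
              then obtain j where j: "j < l" "y = H ! j" using HO by (auto simp: in_set_conv_nth)
              have r1: "R ! j \<in> set R" using HO j by simp
              then have r2: "R ! j \<in> insert x S" "R ! j \<notin> set H" using HO qp by blast+
              have oT: "R ! j \<in> T" using r2 by (simp add: T_def)
              have "g1 y = g1 (R ! j)" using arg_cong[OF m(1), of "\<lambda>xs. xs ! j"] j HO by simp
              also have "\<dots> = g2 (R ! j)" using fun_cong[OF eq, of "R ! j"] oT by simp
              also have "\<dots> = g2 y" using arg_cong[OF m(2), of "\<lambda>xs. xs ! j"] j HO by simp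
              finally show ?thesis .
            qed
          qed
        qed
      qed
      show "(\<lambda>g. restrict g T) ` B q \<subseteq> goodc Q k T"
      proof
        fix h assume "h \<in> (\<lambda>g. restrict g T) ` B q"
        then obtain f c where fc: "f \<in> G" "h = restrict (f(x:=c)) T"
          by (auto simp: B_def Ext_def)
        have "h = restrict f T" using fc by (auto simp: T_def HO(4) restrict_def)
        moreover have "T \<subseteq> S" using HO by (auto simp: T_def)
        ultimately show "h \<in> goodc Q k T" using goodc_restrict fc unfolding G_def by blast
      qed
      show "finite (goodc Q k T)" using finS by (intro finite_goodc) (auto simp: T_def)
    qed
    also have "real (card (goodc Q k T)) \<le> card G * (1/\<alpha>)^(l - 1)"
    proof -
      have pos: "\<alpha>^(l-1) > 0" using \<alpha> by simp
      have "real (card (goodc Q k T)) = card (goodc Q k T) * \<alpha>^(l - 1) / \<alpha>^(l-1)"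
        using pos by (simp only: nonzero_mult_div_cancel_right[OF less_imp_neq[OF pos, symmetric]])
      also have "\<dots> \<le> card G / \<alpha>^(l-1)" using ch pos by (intro divide_right_mono) auto
      finally show ?thesis by (simp add: power_one_over)
    qed
    finally show ?thesis by (simp add: l_def)
  qed
  have "real (card G * k) \<le> real (card G' + (\<Sum>q\<in>Qx. card (B q)))"
  proof -
    have "card Ext \<le> card (G' \<union> (\<Union>q\<in>Qx. B q))"
      by (rule card_mono[OF _ cover])
        (use finQx in \<open>auto simp: G'_def B_def intro!: finite_goodc finS finExt\<close>)
    also have "\<dots> \<le> card G' + card (\<Union>q\<in>Qx. B q)" by (rule card_Un_le)
    also have "\<dots> \<le> card G' + (\<Sum>q\<in>Qx. card (B q))" using card_UN_le[OF finQx] by simp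
    finally have "card Ext \<le> card G' + (\<Sum>q\<in>Qx. card (B q))" .
    then show ?thesis using cardExt by (metis of_nat_le_iff)
  qed
  also have "\<dots> \<le> card G' + (\<Sum>q\<in>Qx. card G * (1/\<alpha>)^(length q div 2 - 1))"
    using Bq by (simp add: sum_mono)
  also have "\<dots> = card G' + card G * (\<Sum>q\<in>Qx. (1/\<alpha>)^(length q div 2 - 1))"
    by (simp add: sum_distrib_left)
  also have "\<dots> \<le> card G' + card G * (\<Sum>q\<in>Qb. (1/\<alpha>)^(length q div 2 - 1))"
    using QxQb finQb \<alpha> by (intro add_left_mono mult_left_mono sum_mono2) auto
  also have "\<dots> \<le> card G' + card G * (real k - \<alpha>)"
    using W xU by (intro add_left_mono mult_left_mono) (auto simp: Qb_def)
  finally have "real (card G) * k \<le> card G' + card G * (real k - \<alpha>)" by simp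
  then show ?case unfolding G_def G'_def by (simp add: algebra_simps)
qed



definition tot :: "'a list \<Rightarrow> ('a + 'a set) list" where
  "tot w = total_seq id w"

lemma total_seq_map: "total_seq c w = map c (tot w)"
  unfolding tot_def by (induction c w rule: total_seq.induct) auto

lemma tot_simps[simp]: "tot [] = []" "tot [v] = [Inl v]"
  "tot (v # w # vs) = Inl v # Inr {v, w} # tot (w # vs)"
  by (simp_all add: tot_def)

lemma length_tot[simp]: "length (tot w) = 2 * length w - 1"
  by (induction w rule: induct_list012) auto

lemma nth_tot: "j < length (tot w) \<Longrightarrow>
  tot w ! j = (if even j then Inl (w ! (j div 2)) else Inr {w ! (j div 2), w ! Suc (j div 2)})"
proof (induction w arbitrary: j rule: induct_list012)
  case 1 then show ?case by simp
next
  case (2 x) then show ?case by simp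
next
  case (3 v w vs)
  show ?case
  proof (cases j)
    case 0 then show ?thesis by simp
  next
    case (Suc j1)
    show ?thesis
    proof (cases j1)
      case 0 then show ?thesis using Suc by simp
    next
      case (Suc j2)
      have jl: "j2 < length (tot (w # vs))" using "3.prems" \<open>j = Suc j1\<close> Suc by simp
      then have IH: "tot (w # vs) ! j2 = (if even j2 then Inl ((w # vs) ! (j2 div 2))
         else Inr {(w # vs) ! (j2 div 2), (w # vs) ! Suc (j2 div 2)})" using "3.IH"(2)[OF jl] by simp
      have j: "j = Suc (Suc j2)" using \<open>j = Suc j1\<close> Suc by simp
      have L: "tot (v # w # vs) ! j = tot (w # vs) ! j2" using j by simp
      have e1: "even j = even j2" using j by simp
      have e2: "j div 2 = Suc (j2 div 2)" using j by simp
      have R1: "(v # w # vs) ! (j div 2) = (w # vs) ! (j2 div 2)" using e2 by simp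
      have R2: "(v # w # vs) ! Suc (j div 2) = (w # vs) ! Suc (j2 div 2)" using e2 by simp
      show ?thesis unfolding L e1 R1 R2 by (rule IH)
    qed
  qed
qed

lemma length_path_edges[simp]: "length (path_edges w) = length w - 1"
  by (simp add: path_edges_def)

lemma nth_path_edges: "i < length w - 1 \<Longrightarrow> path_edges w ! i = {w ! i, w ! Suc i}"
  by (simp add: path_edges_def)

lemma is_path_sub:
  assumes "is_path V E w" "1 \<le> m" "i + m \<le> length w"
  shows "is_path V E (take m (drop i w))"
proof -
  have "take m (drop i w) \<noteq> []" using assms by auto
  moreover have "set (take m (drop i w)) \<subseteq> V"
    using assms set_take_subset set_drop_subset unfolding is_path_def by fastforce
  moreover have "distinct (take m (drop i w))" using assms by (simp add: is_path_def)
  moreover have "{take m (drop i w) ! j, take m (drop i w) ! Suc j} \<in> E"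
    if "Suc j < length (take m (drop i w))" for j
  proof -
    have "Suc (i + j) < length w" using that assms by auto
    then have "{w ! (i + j), w ! Suc (i + j)} \<in> E" using assms(1) by (simp add: is_path_def)
    moreover have "take m (drop i w) ! j = w ! (i + j)" "take m (drop i w) ! Suc j = w ! Suc (i + j)"
      using that assms by (auto simp: nth_drop)
    ultimately show ?thesis by simp
  qed
  ultimately show ?thesis unfolding is_path_def by blast
qed

lemma is_path_rev:
  assumes "is_path V E w" shows "is_path V E (rev w)"
proof -
  have "{rev w ! j, rev w ! Suc j} \<in> E" if j: "Suc j < length (rev w)" for j
  proof -
    define n where "n = length w"
    define i where "i = n - Suc (Suc j)"
    have i: "Suc i < n" "n - Suc j = Suc i" using j by (auto simp: i_def n_def)
    have "{w ! i, w ! Suc i} \<in> E" using assms i by (simp add: is_path_def n_def)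
    moreover have "rev w ! j = w ! Suc i" "rev w ! Suc j = w ! i"
      using j i by (auto simp: rev_nth n_def i_def)
    ultimately show ?thesis by (simp add: insert_commute)
  qed
  then show ?thesis using assms by (auto simp: is_path_def)
qed

lemma distinct_path_edges:
  assumes "distinct w" shows "distinct (path_edges w)"
proof (rule distinct_conv_nth[THEN iffD2], intro allI impI)
  fix i j assume ij: "i < length (path_edges w)" "j < length (path_edges w)" "i \<noteq> j"
  have d: "\<And>a b. a < length w \<Longrightarrow> b < length w \<Longrightarrow> w ! a = w ! b \<Longrightarrow> a = b"
    using assms nth_eq_iff_index_eq by blast
  show "path_edges w ! i \<noteq> path_edges w ! j"
  proof
    assume "path_edges w ! i = path_edges w ! j"
    then have eq: "{w ! i, w ! Suc i} = {w ! j, w ! Suc j}" using ij by (simp add: nth_path_edges)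
    have "w ! i \<in> {w ! j, w ! Suc j}" "w ! j \<in> {w ! i, w ! Suc i}" using eq by blast+
    have l: "i < length w" "j < length w" "Suc i < length w" "Suc j < length w" using ij by auto
    have "w ! i \<noteq> w ! j" using d[OF l(1,2)] ij(3) by blast
    then have "w ! i = w ! Suc j" using \<open>w ! i \<in> {w ! j, w ! Suc j}\<close> by blast
    then have 1: "i = Suc j" using d[OF l(1,4)] by blast
    have "w ! j = w ! Suc i" using \<open>w ! j \<in> {w ! i, w ! Suc i}\<close> \<open>w ! i \<noteq> w ! j\<close> by auto
    then have "j = Suc i" using d[OF l(2,3)] by blast
    then show False using 1 by simp
  qed
qed

lemma distinct_tot:
  assumes "distinct w" shows "distinct (tot w)"
proof (rule distinct_conv_nth[THEN iffD2], intro allI impI)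
  fix i j assume ij: "i < length (tot w)" "j < length (tot w)" "i \<noteq> j"
  have d: "\<And>a b. a < length w \<Longrightarrow> b < length w \<Longrightarrow> w ! a = w ! b \<Longrightarrow> a = b"
    using assms nth_eq_iff_index_eq by blast
  have pe: "distinct (path_edges w)" using distinct_path_edges[OF assms] .
  show "tot w ! i \<noteq> tot w ! j"
  proof (cases "even i = even j")
    case False then show ?thesis using ij by (auto simp: nth_tot)
  next
    case True
    show ?thesis
    proof (cases "even i")
      case True
      then have "i div 2 \<noteq> j div 2" "i div 2 < length w" "j div 2 < length w"
        using \<open>even i = even j\<close> ij by (auto elim!: evenE)
      then have "w ! (i div 2) \<noteq> w ! (j div 2)" using d by blast
      moreover have "even j" using True \<open>even i = even j\<close> by simp
      ultimately show ?thesis using ij True by (simp add: nth_tot)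
    next
      case False
      then have o: "odd j" using \<open>even i = even j\<close> by simp
      have "i div 2 \<noteq> j div 2" using False o ij(3) by (auto elim!: oddE)
      moreover have "i div 2 < length w - 1" "j div 2 < length w - 1"
        using ij False o by (auto elim!: oddE)
      ultimately have "path_edges w ! (i div 2) \<noteq> path_edges w ! (j div 2)"
        using pe by (simp add: nth_eq_iff_index_eq)
      then show ?thesis using ij False o \<open>i div 2 < length w - 1\<close> \<open>j div 2 < length w - 1\<close>
        by (auto simp: nth_tot nth_path_edges)
    qed
  qed
qed

lemma block_E:
  assumes "i + m \<le> length w - 1"
  shows "take m (drop i (path_edges w)) = path_edges (take (Suc m) (drop i w))"
proof (rule nth_equalityI)
  show "length (take m (drop i (path_edges w))) = length (path_edges (take (Suc m) (drop i w)))"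
    using assms by (simp add: min_def) arith
  fix j assume "j < length (take m (drop i (path_edges w)))"
  then have j: "j < m" using assms by simp
  have "take m (drop i (path_edges w)) ! j = path_edges w ! (i + j)" using j assms by simp
  also have "\<dots> = {w ! (i + j), w ! Suc (i + j)}" using j assms by (simp add: nth_path_edges)
  also have "\<dots> = path_edges (take (Suc m) (drop i w)) ! j"
    using j assms by (simp add: nth_path_edges nth_drop)
  finally show "take m (drop i (path_edges w)) ! j = path_edges (take (Suc m) (drop i w)) ! j" .
qed

lemma block_T0:
  assumes "2 * a + 2 * n \<le> length (tot w)" "1 \<le> n"
  shows "take (2 * n) (drop (2 * a) (tot w)) = take (2 * n) (tot (take (Suc n) (drop a w)))"
proof (rule nth_equalityI)
  have lw: "a + n < length w" using assms by simp
  define w' where "w' = take (Suc n) (drop a w)"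
  have lw': "length w' = Suc n" using lw by (simp add: w'_def)
  show "length (take (2 * n) (drop (2 * a) (tot w))) =
        length (take (2 * n) (tot (take (Suc n) (drop a w))))" using assms lw by (auto simp: min_def)
  fix j assume "j < length (take (2 * n) (drop (2 * a) (tot w)))"
  then have j: "j < 2 * n" using assms by simp
  have l1: "2 * a + j < length (tot w)" using j assms by simp
  have l2: "j < length (tot w')" using j lw' by simp
  have e: "(2 * a + j) div 2 = a + j div 2" by simp
  have L: "take (2 * n) (drop (2 * a) (tot w)) ! j = tot w ! (2 * a + j)" using j l1 by simp
  have R: "take (2 * n) (tot w') ! j = tot w' ! j" using j by simp
  have w1: "w' ! (j div 2) = w ! (a + j div 2)" using j lw by (simp add: w'_def)
  show "take (2 * n) (drop (2 * a) (tot w)) ! j = take (2 * n) (tot (take (Suc n) (drop a w))) ! j"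
  proof (cases "even j")
    case True
    have "tot w ! (2 * a + j) = Inl (w ! (a + j div 2))" using nth_tot[OF l1] True e by simp
    moreover have "tot w' ! j = Inl (w' ! (j div 2))" using nth_tot[OF l2] True by simp
    ultimately show ?thesis using L R w1 by (simp add: w'_def)
  next
    case False
    have jn: "Suc (j div 2) < Suc n" using j False by (auto elim!: oddE)
    have w2: "w' ! Suc (j div 2) = w ! Suc (a + j div 2)" using jn lw by (simp add: w'_def)
    have "tot w ! (2 * a + j) = Inr {w ! (a + j div 2), w ! Suc (a + j div 2)}"
      using nth_tot[OF l1] False e by simp
    moreover have "tot w' ! j = Inr {w' ! (j div 2), w' ! Suc (j div 2)}"
      using nth_tot[OF l2] False by simp
    ultimately show ?thesis using L R w1 w2 by (simp add: w'_def)
  qed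
qed

lemma block_T1:
  assumes "2 * a + 1 + 2 * n \<le> length (tot w)" "1 \<le> n"
  shows "take (2 * n) (drop (2 * a + 1) (tot w)) = drop 1 (tot (take (Suc n) (drop a w)))"
proof (rule nth_equalityI)
  have lw: "a + n < length w" using assms by simp
  define w' where "w' = take (Suc n) (drop a w)"
  have lw': "length w' = Suc n" using lw by (simp add: w'_def)
  show "length (take (2 * n) (drop (2 * a + 1) (tot w))) =
        length (drop 1 (tot (take (Suc n) (drop a w))))" using assms lw by (auto simp: min_def)
  fix j assume "j < length (take (2 * n) (drop (2 * a + 1) (tot w)))"
  then have j: "j < 2 * n" using assms by simp
  define j' where "j' = Suc j"
  have l1: "2 * a + j' < length (tot w)" using j assms by (simp add: j'_def)
  have l2: "j' < length (tot w')" using j lw' by (simp add: j'_def)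
  have e: "(2 * a + j') div 2 = a + j' div 2" by simp
  have L: "take (2 * n) (drop (2 * a + 1) (tot w)) ! j = tot w ! (2 * a + j')"
    using j l1 by (simp add: j'_def)
  have R: "drop 1 (tot w') ! j = tot w' ! j'" using l2 by (simp add: j'_def)
  have jl: "j' div 2 \<le> n" using j by (simp add: j'_def)
  have w1: "w' ! (j' div 2) = w ! (a + j' div 2)" using jl lw by (simp add: w'_def)
  show "take (2 * n) (drop (2 * a + 1) (tot w)) ! j = drop 1 (tot (take (Suc n) (drop a w))) ! j"
  proof (cases "even j'")
    case True
    have "tot w ! (2 * a + j') = Inl (w ! (a + j' div 2))" using nth_tot[OF l1] True e by simp
    moreover have "tot w' ! j' = Inl (w' ! (j' div 2))" using nth_tot[OF l2] True by simp
    ultimately show ?thesis using L R w1 by (simp add: w'_def)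
  next
    case False
    have jn: "Suc (j' div 2) < Suc n" using j False by (auto simp: j'_def elim!: oddE)
    have w2: "w' ! Suc (j' div 2) = w ! Suc (a + j' div 2)" using jn lw by (simp add: w'_def)
    have "tot w ! (2 * a + j') = Inr {w ! (a + j' div 2), w ! Suc (a + j' div 2)}"
      using nth_tot[OF l1] False e by simp
    moreover have "tot w' ! j' = Inr {w' ! (j' div 2), w' ! Suc (j' div 2)}"
      using nth_tot[OF l2] False by simp
    ultimately show ?thesis using L R w1 w2 by (simp add: w'_def)
  qed
qed



definition Sp :: "'a set \<Rightarrow> 'a set set \<Rightarrow> nat \<Rightarrow> 'a \<Rightarrow> 'a list set" where
  "Sp V E m u = {w. is_path V E w \<and> length w = m \<and> hd w = u}"

definition Pp :: "'a set \<Rightarrow> 'a set set \<Rightarrow> nat \<Rightarrow> 'a \<Rightarrow> 'a list set" where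
  "Pp V E m u = {w. is_path V E w \<and> length w = m \<and> u \<in> set w}"

lemma finite_Sp: "finite V \<Longrightarrow> finite (Sp V E m u)"
  by (rule finite_subset[OF _ finite_lists_length_eq[of V m]]) (auto simp: is_path_def Sp_def)

lemma finite_Pp: "finite V \<Longrightarrow> finite (Pp V E m u)"
  by (rule finite_subset[OF _ finite_lists_length_eq[of V m]]) (auto simp: is_path_def Pp_def)

lemma sg_edge:
  assumes "simple_graph V E" "{u, v} \<in> E" shows "u \<in> V" "v \<in> V" "u \<noteq> v"
proof -
  have H: "\<forall>e\<in>E. \<exists>a b. a \<noteq> b \<and> e = {a, b} \<and> a \<in> V \<and> b \<in> V"
    using assms(1) by (simp add: simple_graph_def)
  obtain a b where ab: "a \<noteq> b" "{u, v} = {a, b}" "a \<in> V" "b \<in> V"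
    using H[rule_format, OF assms(2)] by blast
  then show "u \<in> V" "v \<in> V" "u \<noteq> v" by (auto simp: doubleton_eq_iff)
qed

lemma sg_finE: assumes "simple_graph V E" shows "finite E"
proof -
  have H: "\<forall>e\<in>E. \<exists>a b. a \<noteq> b \<and> e = {a, b} \<and> a \<in> V \<and> b \<in> V"
    using assms(1) by (simp add: simple_graph_def)
  have "E \<subseteq> Pow V"
  proof
    fix e assume "e \<in> E"
    then obtain a b where "e = {a, b}" "a \<in> V" "b \<in> V" using H by blast
    then show "e \<in> Pow V" by simp
  qed
  moreover have "finite V" using assms by (simp add: simple_graph_def)
  ultimately show ?thesis by (meson finite_Pow_iff finite_subset)
qed

lemma nbr_card:
  assumes sg: "simple_graph V E" shows "card {v. {u, v} \<in> E} \<le> max_degree V E"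
proof (cases "u \<in> V")
  case False
  then have "{v. {u, v} \<in> E} = {}" using sg_edge[OF sg] by blast
  then show ?thesis by simp
next
  case True
  have "card {v. {u, v} \<in> E} \<le> card {e \<in> E. u \<in> e}"
  proof (rule card_inj_on_le[of "\<lambda>v. {u, v}"])
    show "inj_on (\<lambda>v. {u, v}) {v. {u, v} \<in> E}" by (rule inj_onI) (auto simp: doubleton_eq_iff)
    show "(\<lambda>v. {u, v}) ` {v. {u, v} \<in> E} \<subseteq> {e \<in> E. u \<in> e}" by auto
    show "finite {e \<in> E. u \<in> e}" using sg_finE[OF sg] by simp
  qed
  also have "\<dots> = degree E u" by (simp add: degree_def)
  also have "\<dots> \<le> max_degree V E" unfolding max_degree_def
  proof (rule Max_ge)
    have "finite V" using sg by (simp add: simple_graph_def)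
    then show "finite (degree E ` V)" by simp
    show "degree E u \<in> degree E ` V" using True by simp
  qed
  finally show ?thesis .
qed

lemma card_Sp:
  assumes sg: "simple_graph V E"
  shows "card (Sp V E (Suc m) u) \<le> max_degree V E ^ m"
proof (induction m arbitrary: u)
  case 0
  have "Sp V E (Suc 0) u \<subseteq> {[u]}" by (auto simp: Sp_def length_Suc_conv)
  then have "card (Sp V E (Suc 0) u) \<le> card {[u]}" by (intro card_mono) auto
  then show ?case by simp
next
  case (Suc m)
  define D where "D = max_degree V E"
  define N where "N = {v. {u, v} \<in> E}"
  have finV: "finite V" using sg by (simp add: simple_graph_def)
  have finN: "finite N"
    by (rule finite_subset[OF _ finV]) (use sg_edge[OF sg] in \<open>auto simp: N_def\<close>)
  have sub: "Sp V E (Suc (Suc m)) u \<subseteq> (\<lambda>p. u # snd p) ` (SIGMA v:N. Sp V E (Suc m) v)"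
  proof
    fix w assume "w \<in> Sp V E (Suc (Suc m)) u"
    then have w: "is_path V E w" "length w = Suc (Suc m)" "hd w = u" by (auto simp: Sp_def)
    obtain w' where w': "w = u # w'" using w by (cases w) auto
    have lw': "length w' = Suc m" using w w' by simp
    have "take (Suc m) (drop 1 w) = w'" using w' lw' by simp
    moreover have "is_path V E (take (Suc m) (drop 1 w))" by (rule is_path_sub[OF w(1)]) (use w in auto)
    ultimately have pw': "is_path V E w'" by simp
    have "{w ! 0, w ! Suc 0} \<in> E" using w(1,2) unfolding is_path_def by auto
    moreover have "w ! 0 = u" "w ! Suc 0 = hd w'" using w' lw' by (cases w'; simp)+
    ultimately have "hd w' \<in> N" by (simp add: N_def)
    moreover have "w' \<in> Sp V E (Suc m) (hd w')" using pw' lw' by (simp add: Sp_def)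
    ultimately have mem: "(hd w', w') \<in> (SIGMA v:N. Sp V E (Suc m) v)" by blast
    have "w = u # snd (hd w', w')" using w' by simp
    then show "w \<in> (\<lambda>p. u # snd p) ` (SIGMA v:N. Sp V E (Suc m) v)"
      using mem by (rule image_eqI)
  qed
  have finS: "finite (SIGMA v:N. Sp V E (Suc m) v)"
    by (rule finite_SigmaI[OF finN]) (rule finite_Sp[OF finV])
  have "card (Sp V E (Suc (Suc m)) u) \<le> card ((\<lambda>p. u # snd p) ` (SIGMA v:N. Sp V E (Suc m) v))"
    by (rule card_mono[OF finite_imageI[OF finS] sub])
  also have "\<dots> \<le> card (SIGMA v:N. Sp V E (Suc m) v)" by (rule card_image_le[OF finS])
  also have "\<dots> = (\<Sum>v\<in>N. card (Sp V E (Suc m) v))"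
    by (rule card_SigmaI[OF finN]) (simp add: finite_Sp[OF finV])
  also have "\<dots> \<le> (\<Sum>v\<in>N. D ^ m)" using Suc.IH by (intro sum_mono) (simp add: D_def)
  also have "\<dots> = card N * D ^ m" by simp
  also have "\<dots> \<le> D * D ^ m" using nbr_card[OF sg, of u] by (simp add: N_def D_def)
  finally show ?case by (simp add: D_def)
qed

lemma card_Pp:
  assumes sg: "simple_graph V E"
  shows "card (Pp V E (Suc m) u) \<le> Suc m * max_degree V E ^ m"
proof -
  define D where "D = max_degree V E"
  have finV: "finite V" using sg by (simp add: simple_graph_def)
  define F where "F j = (\<lambda>p. rev (fst p) @ tl (snd p)) ` (Sp V E (Suc j) u \<times> Sp V E (Suc m - j) u)" for j
  have sub: "Pp V E (Suc m) u \<subseteq> (\<Union>j\<in>{..m}. F j)"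
  proof
    fix w assume "w \<in> Pp V E (Suc m) u"
    then have w: "is_path V E w" "length w = Suc m" "u \<in> set w" by (auto simp: Pp_def)
    obtain j where j: "j < Suc m" "w ! j = u" using w by (auto simp: in_set_conv_nth)
    define a where "a = rev (take (Suc j) w)"
    define b where "b = drop j w"
    have "is_path V E (take (Suc j) (drop 0 w))" by (rule is_path_sub[OF w(1)]) (use w j in auto)
    then have pa: "is_path V E a" unfolding a_def using is_path_rev by fastforce
    have la: "length a = Suc j" using j w by (simp add: a_def)
    have ne: "take (Suc j) w \<noteq> []" using w by (cases w) auto
    have "last (take (Suc j) w) = take (Suc j) w ! (length (take (Suc j) w) - 1)"
      by (rule last_conv_nth[OF ne])
    also have "\<dots> = w ! j" using j w by simp
    finally have "last (take (Suc j) w) = w ! j" .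
    then have ha: "hd a = u" using j by (simp add: a_def hd_rev)
    have "is_path V E (take (Suc m - j) (drop j w))" by (rule is_path_sub[OF w(1)]) (use w j in auto)
    moreover have "take (Suc m - j) (drop j w) = b" using w by (simp add: b_def)
    ultimately have pb: "is_path V E b" by simp
    have lb: "length b = Suc m - j" using w by (simp add: b_def)
    have hb: "hd b = u" using j w by (simp add: b_def hd_drop_conv_nth)
    have "rev a @ tl b = take (Suc j) w @ drop (Suc j) w"
      by (simp add: a_def b_def tl_drop drop_Suc)
    then have eq: "w = rev a @ tl b" by simp
    have "(a, b) \<in> Sp V E (Suc j) u \<times> Sp V E (Suc m - j) u"
      using pa la ha pb lb hb by (simp add: Sp_def)
    then have "w \<in> F j" unfolding F_def using eq by (intro image_eqI[where x="(a, b)"]) auto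
    then show "w \<in> (\<Union>j\<in>{..m}. F j)" using j by auto
  qed
  have finF: "finite (F j)" for j using finite_Sp[OF finV] by (simp add: F_def)
  have cF: "card (F j) \<le> D ^ m" if "j \<le> m" for j
  proof -
    have "card (F j) \<le> card (Sp V E (Suc j) u \<times> Sp V E (Suc m - j) u)"
      unfolding F_def by (rule card_image_le) (use finite_Sp[OF finV] in auto)
    also have "\<dots> = card (Sp V E (Suc j) u) * card (Sp V E (Suc (m - j)) u)"
      using that by (simp add: card_cartesian_product Suc_diff_le)
    also have "\<dots> \<le> D ^ j * D ^ (m - j)"
      using card_Sp[OF sg] by (intro mult_le_mono) (auto simp: D_def)
    also have "\<dots> = D ^ m" using that by (simp add: power_add[symmetric])
    finally show ?thesis .
  qed
  have "card (Pp V E (Suc m) u) \<le> card (\<Union>j\<in>{..m}. F j)"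
    by (rule card_mono[OF _ sub]) (simp add: finF)
  also have "\<dots> \<le> (\<Sum>j\<in>{..m}. card (F j))" by (rule card_UN_le) simp
  also have "\<dots> \<le> (\<Sum>j\<in>{..m}. D ^ m)" using cF by (intro sum_mono) auto
  also have "\<dots> = Suc m * D ^ m" by simp
  finally show ?thesis by (simp add: D_def)
qed



definition QV :: "'a set \<Rightarrow> 'a set set \<Rightarrow> ('a + 'a set) list set" where
  "QV V E = {take (2*n) (drop i (map Inl w)) | w i n. is_path V E w \<and> 1 \<le> n \<and> i + 2*n \<le> length w}"

definition QE :: "'a set \<Rightarrow> 'a set set \<Rightarrow> ('a + 'a set) list set" where
  "QE V E = {take (2*n) (drop i (map Inr (path_edges w))) | w i n.
     is_path V E w \<and> 1 \<le> n \<and> i + 2*n \<le> length (path_edges w)}"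

definition QT :: "'a set \<Rightarrow> 'a set set \<Rightarrow> ('a + 'a set) list set" where
  "QT V E = {take (2*n) (drop i (tot w)) | w i n. is_path V E w \<and> 1 \<le> n \<and> i + 2*n \<le> length (tot w)}"

definition QQ :: "'a set \<Rightarrow> 'a set set \<Rightarrow> ('a + 'a set) list set" where
  "QQ V E = QV V E \<union> QE V E \<union> QT V E"

definition ux :: "'a + 'a set \<Rightarrow> 'a" where
  "ux x = (case x of Inl v \<Rightarrow> v | Inr e \<Rightarrow> (SOME u. u \<in> e))"

lemma len_block: "i + m \<le> length ys \<Longrightarrow> length (take m (drop i ys)) = m"
  by simp

lemma ux_edge: "a \<in> set w \<Longrightarrow> b \<in> set w \<Longrightarrow> ux (Inr {a, b}) \<in> set w"
proof -
  assume ab: "a \<in> set w" "b \<in> set w"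
  have "(SOME u. u \<in> {a, b}) \<in> {a, b}" by (rule someI[of _ a]) simp
  then show ?thesis using ab by (auto simp: ux_def)
qed

lemma ux_tot: assumes "x \<in> set (tot w)" shows "ux x \<in> set w"
proof -
  obtain j where j: "j < length (tot w)" "x = tot w ! j" using assms by (auto simp: in_set_conv_nth)
  show ?thesis
  proof (cases "even j")
    case True
    then have "x = Inl (w ! (j div 2))" using j nth_tot[OF j(1)] by simp
    moreover have "j div 2 < length w" using j by simp
    ultimately show ?thesis by (simp add: ux_def)
  next
    case False
    then have "x = Inr {w ! (j div 2), w ! Suc (j div 2)}" using j nth_tot[OF j(1)] by simp
    moreover have "Suc (j div 2) < length w" using j False by (auto elim!: oddE)
    then have "w ! (j div 2) \<in> set w" "w ! Suc (j div 2) \<in> set w" by auto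
    ultimately show ?thesis using ux_edge by simp
  qed
qed

lemma ux_pe: assumes "x \<in> set (map Inr (path_edges w))" shows "ux x \<in> set w"
proof -
  obtain j where j: "j < length w - 1" "x = Inr (path_edges w ! j)"
    using assms by (auto simp: in_set_conv_nth)
  then have x: "x = Inr {w ! j, w ! Suc j}" by (simp add: nth_path_edges)
  have "w ! j \<in> set w" "w ! Suc j \<in> set w" using j by auto
  then show ?thesis using ux_edge x by simp
qed

lemma ux_Inl: "x \<in> set (map Inl w) \<Longrightarrow> ux x \<in> set w"
  by (auto simp: ux_def)

lemma QV_sub: "{q \<in> QV V E. length q = 2*l \<and> x \<in> set q} \<subseteq> map Inl ` Pp V E (2*l) (ux x)"
proof
  fix q assume "q \<in> {q \<in> QV V E. length q = 2*l \<and> x \<in> set q}"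
  then obtain w i n where q: "q = take (2*n) (drop i (map Inl w))" "is_path V E w" "1 \<le> n"
    "i + 2*n \<le> length w" "length q = 2*l" "x \<in> set q" by (auto simp: QV_def)
  define w' where "w' = take (2*n) (drop i w)"
  have qw: "q = map Inl w'" using q by (simp add: w'_def take_map drop_map)
  have p: "is_path V E w'" unfolding w'_def by (rule is_path_sub) (use q in auto)
  have "length w' = 2*l" using q(5) qw by simp
  moreover have "ux x \<in> set w'" using q qw ux_Inl by metis
  ultimately show "q \<in> map Inl ` Pp V E (2*l) (ux x)" using p qw by (auto simp: Pp_def)
qed

lemma QE_sub: "{q \<in> QE V E. length q = 2*l \<and> x \<in> set q}
   \<subseteq> (\<lambda>w. map Inr (path_edges w)) ` Pp V E (Suc (2*l)) (ux x)"
proof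
  fix q assume "q \<in> {q \<in> QE V E. length q = 2*l \<and> x \<in> set q}"
  then obtain w i n where q: "q = take (2*n) (drop i (map Inr (path_edges w)))" "is_path V E w" "1 \<le> n"
    "i + 2*n \<le> length w - 1" "length q = 2*l" "x \<in> set q" by (auto simp: QE_def)
  define w' where "w' = take (Suc (2*n)) (drop i w)"
  have qw: "q = map Inr (path_edges w')"
    using q block_E[of i "2*n" w] by (simp add: w'_def take_map drop_map)
  have lw: "i + Suc (2*n) \<le> length w" using q by linarith
  have p: "is_path V E w'" unfolding w'_def by (rule is_path_sub) (use q lw in auto)
  have "length w' = Suc (2*n)" using lw by (simp add: w'_def)
  moreover have "n = l"
  proof -
    have "length q = 2*n" unfolding q(1) by (rule len_block) (use q in simp)
    then show ?thesis using q by simp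
  qed
  moreover have "ux x \<in> set w'" using q qw ux_pe by metis
  ultimately show "q \<in> (\<lambda>w. map Inr (path_edges w)) ` Pp V E (Suc (2*l)) (ux x)"
    using p qw by (auto simp: Pp_def)
qed

lemma QT_sub: "{q \<in> QT V E. length q = 2*l \<and> x \<in> set q}
   \<subseteq> (\<lambda>w. take (2*l) (tot w)) ` Pp V E (Suc l) (ux x) \<union> (\<lambda>w. drop 1 (tot w)) ` Pp V E (Suc l) (ux x)"
proof
  fix q assume "q \<in> {q \<in> QT V E. length q = 2*l \<and> x \<in> set q}"
  then obtain w i n where q: "q = take (2*n) (drop i (tot w))" "is_path V E w" "1 \<le> n"
    "i + 2*n \<le> length (tot w)" "length q = 2*l" "x \<in> set q" by (auto simp: QT_def)
  have nl: "n = l"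
  proof -
    have "length q = 2*n" unfolding q(1) by (rule len_block) (use q in simp)
    then show ?thesis using q by simp
  qed
  define a where "a = i div 2"
  define w' where "w' = take (Suc n) (drop a w)"
  have lw: "a + Suc n \<le> length w" using q by (simp add: a_def)
  have p: "is_path V E w'" unfolding w'_def by (rule is_path_sub) (use q lw in auto)
  have lw': "length w' = Suc n" using lw by (simp add: w'_def)
  have pp: "w' \<in> Pp V E (Suc l) (ux x)" if "x \<in> set (tot w')"
    using p lw' ux_tot[OF that] nl by (simp add: Pp_def)
  show "q \<in> (\<lambda>w. take (2*l) (tot w)) ` Pp V E (Suc l) (ux x) \<union> (\<lambda>w. drop 1 (tot w)) ` Pp V E (Suc l) (ux x)"
  proof (cases "even i")
    case True
    then have i: "i = 2 * a" by (simp add: a_def)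
    have qw: "q = take (2*n) (tot w')" using q block_T0[of a n w] i by (simp add: w'_def)
    have "x \<in> set (tot w')" using q(6) qw by (meson in_set_takeD)
    then show ?thesis using pp qw nl by blast
  next
    case False
    then have i: "i = 2 * a + 1" by (simp add: a_def)
    have qw: "q = drop 1 (tot w')" using q block_T1[of a n w] i by (simp add: w'_def)
    have "x \<in> set (tot w')" using q(6) qw by (meson in_set_dropD)
    then show ?thesis using pp qw nl by blast
  qed
qed

lemma QQ_props:
  assumes "q \<in> QQ V E"
  shows "distinct q" "length q = 2 * (length q div 2)" "length q > 0"
proof -
  obtain ys i n where q: "q = take (2*n) (drop i ys)" "distinct ys" "1 \<le> n" "i + 2*n \<le> length ys"
  proof -
    consider "q \<in> QV V E" | "q \<in> QE V E" | "q \<in> QT V E" using assms by (auto simp: QQ_def)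
    then show thesis
    proof cases
      case 1
      then obtain w i n where "q = take (2*n) (drop i (map Inl w))" "is_path V E w" "1 \<le> n"
        "i + 2*n \<le> length w" by (auto simp: QV_def)
      moreover have "distinct (map (Inl :: 'a \<Rightarrow> 'a + 'a set) w)" using \<open>is_path V E w\<close>
        by (simp add: is_path_def distinct_map)
      ultimately show thesis using that by (metis length_map)
    next
      case 2
      then obtain w i n where "q = take (2*n) (drop i (map Inr (path_edges w)))" "is_path V E w" "1 \<le> n"
        "i + 2*n \<le> length (path_edges w)" by (auto simp: QE_def)
      moreover have "distinct (map (Inr :: 'a set \<Rightarrow> 'a + 'a set) (path_edges w))"
      proof -
        have "distinct w" using \<open>is_path V E w\<close> by (simp add: is_path_def)
        then have "distinct (path_edges w)" by (rule distinct_path_edges)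
        then show ?thesis by (simp add: distinct_map)
      qed
      ultimately show thesis using that by (metis length_map)
    next
      case 3
      then obtain w i n where "q = take (2*n) (drop i (tot w))" "is_path V E w" "1 \<le> n"
        "i + 2*n \<le> length (tot w)" by (auto simp: QT_def)
      moreover have "distinct (tot w)"
      proof -
        have "distinct w" using \<open>is_path V E w\<close> by (simp add: is_path_def)
        then show ?thesis by (rule distinct_tot)
      qed
      ultimately show thesis using that by metis
    qed
  qed
  then show "distinct q" by simp
  have "length q = 2 * n" unfolding q(1) by (rule len_block) (use q in simp)
  then show "length q = 2 * (length q div 2)" "length q > 0" using q by auto
qed

lemma count_l:
  fixes x :: "'a + 'a set"
  assumes sg: "simple_graph V E" and l: "1 \<le> l"
  shows "card {q \<in> QQ V E. length q = 2*l \<and> x \<in> set q}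
    \<le> 2*l * max_degree V E ^ (2*l-1) + Suc (2*l) * max_degree V E ^ (2*l) + 2 * (Suc l * max_degree V E ^ l)"
proof -
  define D where "D = max_degree V E"
  have finV: "finite V" using sg by (simp add: simple_graph_def)
  define A1 where "A1 = map (Inl :: 'a \<Rightarrow> 'a + 'a set) ` Pp V E (2*l) (ux x)"
  define A2 where "A2 = (\<lambda>w. map (Inr :: 'a set \<Rightarrow> 'a + 'a set) (path_edges w)) ` Pp V E (Suc (2*l)) (ux x)"
  define A3 where "A3 = (\<lambda>w. take (2*l) (tot w)) ` Pp V E (Suc l) (ux x)"
  define A4 where "A4 = (\<lambda>w. drop 1 (tot w)) ` Pp V E (Suc l) (ux x)"
  have sub: "{q \<in> QQ V E. length q = 2*l \<and> x \<in> set q} \<subseteq> A1 \<union> A2 \<union> (A3 \<union> A4)"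
    using QV_sub[of V E l x] QE_sub[of V E l x] QT_sub[of V E l x]
    unfolding QQ_def A1_def A2_def A3_def A4_def by blast
  have fin: "finite A1" "finite A2" "finite A3" "finite A4"
    unfolding A1_def A2_def A3_def A4_def by (simp_all add: finite_Pp[OF finV])
  have e: "2*l = Suc (2*l - 1)" using l by simp
  have c1: "card A1 \<le> 2*l * D ^ (2*l-1)"
  proof -
    have "card A1 \<le> card (Pp V E (2*l) (ux x))" unfolding A1_def
      by (rule card_image_le[OF finite_Pp[OF finV]])
    also have "\<dots> \<le> 2*l * D ^ (2*l-1)" using card_Pp[OF sg, of "2*l-1" "ux x"] e
      by (simp add: D_def)
    finally show ?thesis .
  qed
  have c2: "card A2 \<le> Suc (2*l) * D ^ (2*l)"
  proof -
    have "card A2 \<le> card (Pp V E (Suc (2*l)) (ux x))" unfolding A2_def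
      by (rule card_image_le[OF finite_Pp[OF finV]])
    also have "\<dots> \<le> Suc (2*l) * D ^ (2*l)" using card_Pp[OF sg, of "2*l" "ux x"] by (simp add: D_def)
    finally show ?thesis .
  qed
  have c3: "card A3 \<le> Suc l * D ^ l" "card A4 \<le> Suc l * D ^ l"
  proof -
    have "card A3 \<le> card (Pp V E (Suc l) (ux x))" unfolding A3_def
      by (rule card_image_le[OF finite_Pp[OF finV]])
    also have "\<dots> \<le> Suc l * D ^ l" using card_Pp[OF sg, of l "ux x"] by (simp add: D_def)
    finally show "card A3 \<le> Suc l * D ^ l" .
    have "card A4 \<le> card (Pp V E (Suc l) (ux x))" unfolding A4_def
      by (rule card_image_le[OF finite_Pp[OF finV]])
    also have "\<dots> \<le> Suc l * D ^ l" using card_Pp[OF sg, of l "ux x"] by (simp add: D_def)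
    finally show "card A4 \<le> Suc l * D ^ l" .
  qed
  have "card {q \<in> QQ V E. length q = 2*l \<and> x \<in> set q} \<le> card (A1 \<union> A2 \<union> (A3 \<union> A4))"
    by (rule card_mono[OF _ sub]) (simp add: fin)
  also have "\<dots> \<le> card A1 + card A2 + (card A3 + card A4)"
    by (meson add_mono card_Un_le le_trans)
  also have "\<dots> \<le> 2*l * D ^ (2*l-1) + Suc (2*l) * D ^ (2*l) + 2 * (Suc l * D ^ l)"
    using c1 c2 c3 by linarith
  finally show ?thesis by (simp add: D_def)
qed

lemma numeric:
  fixes D l :: nat
  assumes D: "3 \<le> D" and l: "1 \<le> l"
  shows "2*l * D ^ (2*l-1) + Suc (2*l) * D ^ (2*l) + 2 * (Suc l * D ^ l) \<le> 5 * 2^(l-1) * D^(2*l)"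
proof -
  have h1: "3 * D ^ (2*l-1) \<le> D ^ (2*l)"
  proof -
    have "D ^ (2*l) = D * D ^ (2*l-1)" using l by (metis Suc_diff_1 mult_pos_pos pos2 power_Suc
      less_le_trans zero_less_one le_numeral_extra(4) numeral_le_one_iff semiring_norm(69) not_le)
    then show ?thesis using D by simp
  qed
  have h2: "3 * D ^ l \<le> D ^ (2*l)"
  proof -
    have "D \<le> D ^ l" using D l by (simp add: self_le_power)
    then have "3 * D ^ l \<le> D ^ l * D ^ l" using D by (meson le_trans mult_le_mono1)
    also have "\<dots> = D ^ (2*l)" by (simp add: power_add[symmetric] mult_2)
    finally show ?thesis .
  qed
  have h3: "10 * l + 5 \<le> 15 * 2^(l-1)"
    using l
  proof (induction l rule: dec_induct)
    case base then show ?case by simp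
  next
    case (step m)
    have "(2::nat)^(Suc m - 1) = 2 * 2^(m-1)" using step(1)
      by (metis Suc_diff_1 diff_Suc_1 less_le_trans power_Suc zero_less_one)
    then show ?case using step by simp
  qed
  have "3 * (2*l * D ^ (2*l-1) + Suc (2*l) * D ^ (2*l) + 2 * (Suc l * D ^ l))
     = 2*l * (3 * D ^ (2*l-1)) + 3 * Suc (2*l) * D ^ (2*l) + 2 * Suc l * (3 * D ^ l)"
    by (simp add: algebra_simps)
  also have "\<dots> \<le> 2*l * D ^ (2*l) + 3 * Suc (2*l) * D ^ (2*l) + 2 * Suc l * D ^ (2*l)"
    using h1 h2 by (intro add_mono mult_le_mono2) auto
  also have "\<dots> = (10 * l + 5) * D ^ (2*l)" by (simp add: algebra_simps)
  also have "\<dots> \<le> 15 * 2^(l-1) * D ^ (2*l)" using h3 by (intro mult_le_mono1)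
  finally show ?thesis by simp
qed


lemma term_eq:
  fixes D :: nat and r :: real
  assumes D: "3 \<le> D" and r: "r = 1 / (5 * real (D^2))"
  shows "real (5 * 2^m * D^(2 * Suc m)) * r^m = 5 * real (D^2) * (2/5)^m"
proof -
  define d where "d = real (D^2)"
  have dpos: "d > 0" using D by (simp add: d_def)
  have n: "D^(2 * Suc m) = D^2 * (D^2)^m" by (metis power_add power_mult mult_Suc_right)
  have DD: "real (D^(2 * Suc m)) = d * d^m" unfolding n d_def by simp
  have rr: "r^m = 1 / (5^m * d^m)" by (simp add: r d_def power_divide power_mult_distrib)
  have "real (5 * 2^m * D^(2 * Suc m)) * r^m = 5 * 2^m * (d * d^m) * (1 / (5^m * d^m))"
    using DD rr by simp
  also have "\<dots> = 5 * d * (2^m / 5^m)" using dpos by (simp add: field_simps)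
  also have "\<dots> = 5 * d * (2/5)^m" by (simp add: power_divide)
  finally show ?thesis by (simp add: d_def)
qed

lemma geom_bound: "(\<Sum>i<n. (2/5::real)^i) \<le> 5/3"
proof -
  have "(\<Sum>i<n. (2/5::real)^i) = (1 - (2/5)^n) / (1 - 2/5)" by (simp add: sum_gp_strict)
  also have "\<dots> \<le> 5/3" by (simp add: field_simps)
  finally show ?thesis .
qed

lemma weight:
  fixes x :: "'a + 'a set" and U :: "('a + 'a set) set"
  assumes sg: "simple_graph V E" and D3: "3 \<le> max_degree V E" and finU: "finite U"
  shows "(\<Sum>q\<in>{q\<in>QQ V E. set q \<subseteq> U \<and> x \<in> set q}. (1/(5 * real (max_degree V E ^ 2)))^(length q div 2 - 1))
         \<le> 25 * real (max_degree V E ^ 2) / 3"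
proof -
  define D where "D = max_degree V E"
  define r where "r = 1/(5 * real (D^2))"
  define Qb where "Qb = {q\<in>QQ V E. set q \<subseteq> U \<and> x \<in> set q}"
  define g where "g q = length q div 2" for q :: "('a + 'a set) list"
  have D: "3 \<le> D" using D3 by (simp add: D_def)
  have r0: "0 \<le> r" by (simp add: r_def)
  have finQb: "finite Qb"
    by (rule finite_subset[OF _ finite_subset_distinct[OF finU]]) (use QQ_props(1) in \<open>auto simp: Qb_def\<close>)
  define T where "T = g ` Qb"
  have finT: "finite T" using finQb by (simp add: T_def)
  have T1: "1 \<le> l" if lT: "l \<in> T" for l
  proof -
    obtain q where q: "q \<in> Qb" "l = g q" using lT unfolding T_def by blast
    then have "q \<in> QQ V E" by (simp add: Qb_def)
    then have h: "length q = 2 * (length q div 2)" "length q > 0" using QQ_props by blast+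
    have "length q div 2 \<noteq> 0"
    proof
      assume "length q div 2 = 0"
      then have "length q = 0" using h(1) by simp
      then show False using h(2) by simp
    qed
    then show ?thesis using q by (simp add: g_def)
  qed
  define N where "N = Max (insert 0 T)"
  have TN: "T \<subseteq> {1..Suc N}"
  proof
    fix l assume "l \<in> T"
    then have "l \<le> N" unfolding N_def using finT by simp
    then show "l \<in> {1..Suc N}" using T1[OF \<open>l \<in> T\<close>] by simp
  qed
  have cnt: "card {q\<in>Qb. g q = l} \<le> 5 * 2^(l-1) * D^(2*l)" if "l \<in> T" for l
  proof -
    have l: "1 \<le> l" using T1 that .
    have "{q\<in>Qb. g q = l} \<subseteq> {q \<in> QQ V E. length q = 2*l \<and> x \<in> set q}"
    proof
      fix q assume "q \<in> {q\<in>Qb. g q = l}"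
      then have q: "q \<in> QQ V E" "x \<in> set q" "length q div 2 = l" by (auto simp: Qb_def g_def)
      then have "length q = 2 * (length q div 2)" using QQ_props by blast
      then show "q \<in> {q \<in> QQ V E. length q = 2*l \<and> x \<in> set q}" using q by simp
    qed
    then have "card {q\<in>Qb. g q = l} \<le> card {q \<in> QQ V E. length q = 2*l \<and> x \<in> set q}"
    proof (rule card_mono[rotated])
      have "{q \<in> QQ V E. length q = 2*l \<and> x \<in> set q} \<subseteq>
        {xs. set xs \<subseteq> Inl ` V \<union> Inr ` E \<and> length xs = 2 * l} \<union> UNIV" by blast
      have finV: "finite V" using sg by (simp add: simple_graph_def)
      have "{q \<in> QQ V E. length q = 2*l \<and> x \<in> set q} \<subseteq>
         map (Inl :: 'a \<Rightarrow> 'a + 'a set) ` Pp V E (2*l) (ux x) \<union>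
         (\<lambda>w. map (Inr :: 'a set \<Rightarrow> 'a + 'a set) (path_edges w)) ` Pp V E (Suc (2*l)) (ux x) \<union>
         ((\<lambda>w. take (2*l) (tot w)) ` Pp V E (Suc l) (ux x) \<union> (\<lambda>w. drop 1 (tot w)) ` Pp V E (Suc l) (ux x))"
        using QV_sub[of V E l x] QE_sub[of V E l x] QT_sub[of V E l x] unfolding QQ_def by blast
      moreover have "finite (map (Inl :: 'a \<Rightarrow> 'a + 'a set) ` Pp V E (2*l) (ux x) \<union>
         (\<lambda>w. map (Inr :: 'a set \<Rightarrow> 'a + 'a set) (path_edges w)) ` Pp V E (Suc (2*l)) (ux x) \<union>
         ((\<lambda>w. take (2*l) (tot w)) ` Pp V E (Suc l) (ux x) \<union> (\<lambda>w. drop 1 (tot w)) ` Pp V E (Suc l) (ux x)))"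
        by (simp add: finite_Pp[OF finV])
      ultimately show "finite {q \<in> QQ V E. length q = 2*l \<and> x \<in> set q}" by (rule finite_subset)
    qed
    also have "\<dots> \<le> 2*l * D ^ (2*l-1) + Suc (2*l) * D ^ (2*l) + 2 * (Suc l * D ^ l)"
      using count_l[OF sg l, of x] by (simp add: D_def)
    also have "\<dots> \<le> 5 * 2^(l-1) * D^(2*l)" by (rule numeric[OF D l])
    finally show ?thesis .
  qed
  have "(\<Sum>q\<in>Qb. r^(g q - 1)) = (\<Sum>l\<in>T. \<Sum>q\<in>{q\<in>Qb. g q = l}. r^(g q - 1))"
    by (rule sum.group[symmetric]) (use finQb finT in \<open>auto simp: T_def\<close>)
  also have "\<dots> = (\<Sum>l\<in>T. real (card {q\<in>Qb. g q = l}) * r^(l - 1))"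
  proof (rule sum.cong[OF refl])
    fix l assume "l \<in> T"
    have "(\<Sum>q\<in>{q\<in>Qb. g q = l}. r^(g q - 1)) = (\<Sum>q\<in>{q\<in>Qb. g q = l}. r^(l - 1))"
      by (rule sum.cong) auto
    then show "(\<Sum>q\<in>{q\<in>Qb. g q = l}. r^(g q - 1)) = real (card {q\<in>Qb. g q = l}) * r^(l - 1)"
      by simp
  qed
  also have "\<dots> \<le> (\<Sum>l\<in>T. real (5 * 2^(l-1) * D^(2*l)) * r^(l - 1))"
  proof (rule sum_mono)
    fix l assume "l \<in> T"
    show "real (card {q\<in>Qb. g q = l}) * r^(l - 1) \<le> real (5 * 2^(l-1) * D^(2*l)) * r^(l - 1)"
      using cnt[OF \<open>l \<in> T\<close>] r0 by (intro mult_right_mono) (simp_all only: of_nat_le_iff zero_le_power)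
  qed
  also have "\<dots> = (\<Sum>l\<in>T. 5 * real (D^2) * (2/5)^(l - 1))"
  proof (rule sum.cong[OF refl])
    fix l assume "l \<in> T"
    then obtain m where m: "l = Suc m" using T1 by (metis Suc_pred' less_le_trans zero_less_one)
    show "real (5 * 2^(l-1) * D^(2*l)) * r^(l - 1) = 5 * real (D^2) * (2/5)^(l - 1)"
      using term_eq[OF D r_def, of m] m by simp
  qed
  also have "\<dots> \<le> (\<Sum>l\<in>{1..Suc N}. 5 * real (D^2) * (2/5)^(l - 1))"
    by (rule sum_mono2) (use TN in auto)
  also have "\<dots> = (\<Sum>i=0..N. 5 * real (D^2) * (2/5)^i)"
    using sum.shift_bounds_cl_Suc_ivl[of "\<lambda>l. 5 * real (D^2) * (2/5)^(l - 1)" 0 N] by simp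
  also have "\<dots> = 5 * real (D^2) * (\<Sum>i<Suc N. (2/5)^i)"
    by (simp add: sum_distrib_left atLeast0AtMost lessThan_Suc_atMost)
  also have "\<dots> \<le> 5 * real (D^2) * (5/3)"
    by (rule mult_left_mono[OF geom_bound]) simp
  finally show ?thesis by (simp add: Qb_def g_def r_def D_def)
qed

lemma nonrep_good:
  assumes f: "f \<in> goodc Q k U" and ys: "set ys \<subseteq> U"
    and Q: "\<And>i n. 1 \<le> n \<Longrightarrow> i + 2*n \<le> length ys \<Longrightarrow> take (2*n) (drop i ys) \<in> Q"
  shows "nonrepetitive (map f ys)"
  unfolding nonrepetitive_def
proof (rule notI, elim exE conjE)
  fix i n assume n: "1 \<le> n" and len: "i + 2*n \<le> length (map f ys)"
    and eq: "take n (drop i (map f ys)) = take n (drop (i + n) (map f ys))"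
  define q where "q = take (2*n) (drop i ys)"
  have len': "i + 2*n \<le> length ys" using len by simp
  have qQ: "q \<in> Q" using Q[OF n len'] by (simp add: q_def)
  have "set q \<subseteq> set ys" unfolding q_def by (meson order_trans set_drop_subset set_take_subset)
  then have qU: "set q \<subseteq> U" using ys by blast
  have "\<forall>q\<in>Q. set q \<subseteq> U \<longrightarrow> \<not> sqr (map f q)" using f unfolding goodc_def by blast
  then have nsq: "\<not> sqr (map f q)" using qQ qU by blast
  have lq: "length (map f q) div 2 = n" unfolding q_def using len' by simp
  have t: "take n (map f q) = take n (drop i (map f ys))" by (simp add: q_def take_map drop_map)
  have d: "drop n (map f q) = take n (drop (i + n) (map f ys))"
    by (simp add: q_def drop_take take_map drop_map add.commute)
  have "sqr (map f q)" unfolding sqr_def lq t d by (rule eq)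
  then show False using nsq by contradiction
qed

lemma tot_U:
  assumes "is_path V E vs" shows "set (tot vs) \<subseteq> Inl ` V \<union> Inr ` E"
proof
  fix x assume "x \<in> set (tot vs)"
  then obtain j where j: "j < length (tot vs)" "x = tot vs ! j" by (auto simp: in_set_conv_nth)
  show "x \<in> Inl ` V \<union> Inr ` E"
  proof (cases "even j")
    case True
    then have x: "x = Inl (vs ! (j div 2))" using j nth_tot[OF j(1)] by simp
    have "j div 2 < length vs" using j by simp
    then have "vs ! (j div 2) \<in> V" using assms unfolding is_path_def by (meson nth_mem subsetD)
    then show ?thesis using x by simp
  next
    case False
    then have x: "x = Inr {vs ! (j div 2), vs ! Suc (j div 2)}" using j nth_tot[OF j(1)] by simp
    have "Suc (j div 2) < length vs" using j False by (auto elim!: oddE)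
    then have "{vs ! (j div 2), vs ! Suc (j div 2)} \<in> E" using assms unfolding is_path_def by blast
    then show ?thesis using x by simp
  qed
qed

lemma pe_U:
  assumes "is_path V E vs"
  shows "set (map (Inr :: 'a set \<Rightarrow> 'a + 'a set) (path_edges vs)) \<subseteq> Inl ` V \<union> Inr ` E"
proof
  fix x assume "x \<in> set (map (Inr :: 'a set \<Rightarrow> 'a + 'a set) (path_edges vs))"
  then obtain j where j: "j < length vs - 1" "x = Inr (path_edges vs ! j)" by (auto simp: in_set_conv_nth)
  then have x: "x = Inr {vs ! j, vs ! Suc j}" by (simp add: nth_path_edges)
  have "Suc j < length vs" using j by simp
  then have "{vs ! j, vs ! Suc j} \<in> E" using assms unfolding is_path_def by blast
  then show "x \<in> Inl ` V \<union> Inr ` E" using x by simp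
qed

lemma vs_U:
  assumes "is_path V E vs" shows "set (map (Inl :: 'a \<Rightarrow> 'a + 'a set) vs) \<subseteq> Inl ` V \<union> Inr ` E"
  using assms unfolding is_path_def by auto

theorem theorem18:
  fixes V :: "'a set" and E :: "'a set set"
  assumes "simple_graph V E"
    and "max_degree V E \<ge> 3"
  shows "pi_T V E < 15 * (max_degree V E)\<^sup>2"
proof -
  define D where "D = max_degree V E"
  have D3: "3 \<le> D" using assms(2) by (simp add: D_def)
  have D9: "9 \<le> D^2"
  proof -
    have "3^2 \<le> D^2" using D3 by (rule power_mono) simp
    then show ?thesis by simp
  qed
  have finV: "finite V" using assms(1) by (simp add: simple_graph_def)
  have finE: "finite E" by (rule sg_finE[OF assms(1)])
  define U :: "('a + 'a set) set" where "U = Inl ` V \<union> Inr ` E"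
  have finU: "finite U" using finV finE by (simp add: U_def)
  define Q where "Q = QQ V E"
  define k where "k = 15 * D^2 - 1"
  define \<alpha> where "\<alpha> = 5 * real (D^2)"
  have R9: "(9::real) \<le> real (D^2)"
  proof -
    have "real 9 \<le> real (D^2)" using D9 by (simp only: of_nat_le_iff)
    then show ?thesis by simp
  qed
  have \<alpha>1: "\<alpha> \<ge> 1" using R9 by (simp add: \<alpha>_def)
  have Qp: "\<forall>q\<in>Q. distinct q \<and> even (length q) \<and> length q > 0"
  proof
    fix q assume "q \<in> Q"
    then have q: "q \<in> QQ V E" by (simp add: Q_def)
    have "length q = 2 * (length q div 2)" using QQ_props(2)[OF q] .
    then have "even (length q)" by (metis dvd_triv_left)
    then show "distinct q \<and> even (length q) \<and> length q > 0" using QQ_props(1,3)[OF q] by simp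
  qed
  have W: "\<forall>x\<in>U. (\<Sum>q\<in>{q\<in>Q. set q \<subseteq> U \<and> x \<in> set q}. (1/\<alpha>)^(length q div 2 - 1)) \<le> real k - \<alpha>"
  proof
    fix x assume "x \<in> U"
    have "(\<Sum>q\<in>{q\<in>Q. set q \<subseteq> U \<and> x \<in> set q}. (1/\<alpha>)^(length q div 2 - 1)) \<le> 25 * real (D^2) / 3"
      using weight[OF assms(1) assms(2) finU, of x] by (simp add: Q_def \<alpha>_def D_def)
    also have "\<dots> \<le> real k - \<alpha>"
    proof -
      have "real k = 15 * real (D^2) - 1" using D9 by (simp add: k_def of_nat_diff)
      moreover have "real (D^2) \<ge> 9" using R9 by simp
      ultimately show ?thesis by (simp add: \<alpha>_def)
    qed
    finally show "(\<Sum>q\<in>{q\<in>Q. set q \<subseteq> U \<and> x \<in> set q}. (1/\<alpha>)^(length q div 2 - 1)) \<le> real k - \<alpha>" .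
  qed
  have ratio': "\<alpha> * card (goodc Q k S) \<le> card (goodc Q k (insert x S))"
    if "S \<subseteq> U" "x \<in> U" "x \<notin> S" for S x
    using ratio[OF finU Qp \<alpha>1 W that] .
  have ne: "goodc Q k S \<noteq> {}" if "finite S" "S \<subseteq> U" for S
    using that
  proof (induction S rule: finite_induct)
    case empty
    have "(\<lambda>_. undefined) \<in> {} \<rightarrow>\<^sub>E {..<k}" by simp
    moreover have "\<forall>q\<in>Q. set q \<subseteq> {} \<longrightarrow> \<not> sqr (map (\<lambda>_. undefined) q)"
      using Qp by auto
    ultimately have "(\<lambda>_. undefined) \<in> goodc Q k {}" unfolding goodc_def by blast
    then show ?case by blast
  next
    case (insert x S)
    have gS: "goodc Q k S \<noteq> {}" using insert by simp
    have "finite (goodc Q k S)" using insert(1) by (rule finite_goodc)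
    then have c: "card (goodc Q k S) \<ge> 1" using gS by (simp add: Suc_le_eq card_gt_0_iff)
    have "1 \<le> \<alpha> * card (goodc Q k S)"
    proof -
      have "1 * 1 \<le> \<alpha> * real (card (goodc Q k S))"
        using c \<alpha>1 by (intro mult_mono) auto
      then show ?thesis by simp
    qed
    also have "\<dots> \<le> card (goodc Q k (insert x S))" using ratio'[of S x] insert by simp
    finally have "card (goodc Q k (insert x S)) \<noteq> 0" by auto
    then show ?case by auto
  qed
  obtain f where f: "f \<in> goodc Q k U" using ne[OF finU] by blast
  have fPi: "f \<in> U \<rightarrow>\<^sub>E {..<k}" using f by (simp add: goodc_def)
  have c1: "\<forall>v\<in>V. f (Inl v) < k"
  proof
    fix v assume "v \<in> V" then have "Inl v \<in> U" by (simp add: U_def)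
    then show "f (Inl v) < k" using fPi by (metis PiE_mem lessThan_iff)
  qed
  have c2: "\<forall>e\<in>E. f (Inr e) < k"
  proof
    fix e assume "e \<in> E" then have "Inr e \<in> U" by (simp add: U_def)
    then show "f (Inr e) < k" using fPi by (metis PiE_mem lessThan_iff)
  qed
  have c3: "nonrepetitive (total_seq f vs) \<and> nonrepetitive (map (\<lambda>v. f (Inl v)) vs) \<and>
        nonrepetitive (map (\<lambda>e. f (Inr e)) (path_edges vs))" if p: "is_path V E vs" for vs
  proof (intro conjI)
    have "nonrepetitive (map f (tot vs))"
    proof (rule nonrep_good[OF f])
      show "set (tot vs) \<subseteq> U" using tot_U[OF p] by (simp add: U_def)
      show "take (2*n) (drop i (tot vs)) \<in> Q" if "1 \<le> n" "i + 2*n \<le> length (tot vs)" for i n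
        using p that unfolding Q_def QQ_def QT_def by blast
    qed
    then show "nonrepetitive (total_seq f vs)" by (simp add: total_seq_map)
    have "nonrepetitive (map f (map Inl vs))"
    proof (rule nonrep_good[OF f])
      show "set (map Inl vs) \<subseteq> U" using vs_U[OF p] by (simp add: U_def)
      show "take (2*n) (drop i (map Inl vs)) \<in> Q" if "1 \<le> n" "i + 2*n \<le> length (map Inl vs)" for i n
        using p that unfolding Q_def QQ_def QV_def by auto
    qed
    then show "nonrepetitive (map (\<lambda>v. f (Inl v)) vs)" by (simp add: comp_def)
    have "nonrepetitive (map f (map Inr (path_edges vs)))"
    proof (rule nonrep_good[OF f])
      show "set (map Inr (path_edges vs)) \<subseteq> U" using pe_U[OF p] by (simp add: U_def)
      show "take (2*n) (drop i (map Inr (path_edges vs))) \<in> Q"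
        if "1 \<le> n" "i + 2*n \<le> length (map Inr (path_edges vs))" for i n
        using p that unfolding Q_def QQ_def QE_def by auto
    qed
    then show "nonrepetitive (map (\<lambda>e. f (Inr e)) (path_edges vs))" by (simp add: comp_def)
  qed
  have ttc: "total_thue_colouring V E f k"
    unfolding total_thue_colouring_def using c1 c2 c3 by blast
  have "pi_T V E \<le> k" unfolding pi_T_def by (rule Least_le) (use ttc in blast)
  moreover have "k < 15 * D^2" using D9 by (simp add: k_def)
  ultimately show ?thesis by (simp add: D_def)
qed


end
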